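(* Every integer $n\geq 3$ with $n\neq 5$ and $n\not\equiv 0\pmod 4$ can be written as a sum of four squares of coprime integers, at most one of which is zero. *)

theory Defs
  imports Main
begin

end

theory Submission
  imports Defs "HOL-Number_Theory.Number_Theory"
begin

type_synonym q4 = "int \<times> int \<times> int \<times> int"

fun nrm :: "q4 \<Rightarrow> int" where
  "nrm (a,b,c,d) = a^2+b^2+c^2+d^2"
fun qmul :: "q4 \<Rightarrow> q4 \<Rightarrow> q4" where
  "qmul (a,b,c,d) (e,f,g,h) = (a*e - b*f - c*g - d*h, a*f + b*e + c*h - d*g,
      a*g - b*h + c*e + d*f, a*h + b*g - c*f + d*e)"
fun qcnj :: "q4 \<Rightarrow> q4" where
  "qcnj (a,b,c,d) = (a,-b,-c,-d)"
fun qsub :: "q4 \<Rightarrow> q4 \<Rightarrow> q4" where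
  "qsub (a,b,c,d) (e,f,g,h) = (a-e,b-f,c-g,d-h)"
fun inL :: "int \<Rightarrow> int \<Rightarrow> int \<Rightarrow> q4 \<Rightarrow> bool" where
  "inL n x y (a,b,c,d) = (n dvd a - x*c - y*d \<and> n dvd b - y*c + x*d)"

lemma nrm_mul: "nrm (qmul p q) = nrm p * nrm q"
  by (cases p; cases q) (simp add: power2_eq_square algebra_simps)

lemma nrm_cnj: "nrm (qcnj p) = nrm p"
  by (cases p) simp

lemma inL_sub: "inL n x y v \<Longrightarrow> inL n x y w \<Longrightarrow> inL n x y (qsub v w)"
proof -
  assume v: "inL n x y v" and w: "inL n x y w"
  obtain a b c d where vv: "v = (a,b,c,d)" by (cases v)
  obtain e f g h where ww: "w = (e,f,g,h)" by (cases w)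
  have 1: "(a-e) - x*(c-g) - y*(d-h) = (a - x*c - y*d) - (e - x*g - y*h)" by (simp add: algebra_simps power2_eq_square)
  have 2: "(b-f) - y*(c-g) + x*(d-h) = (b - y*c + x*d) - (f - y*g + x*h)" by (simp add: algebra_simps power2_eq_square)
  show ?thesis using v w unfolding vv ww by (simp only: inL.simps qsub.simps 1 2) (auto intro: dvd_diff)
qed

lemma inL_mul:
  assumes r: "n dvd x^2+y^2+1" and v: "inL n x y v"
  shows "inL n x y (qmul v w)"
proof -
  obtain a b c d where vv: "v = (a,b,c,d)" by (cases v)
  obtain e f g h where ww: "w = (e,f,g,h)" by (cases w)
  obtain s where s: "a - x*c - y*d = n*s" using v vv by auto
  obtain t where t: "b - y*c + x*d = n*t" using v vv by auto
  have a: "a = x*c + y*d + n*s" using s by simp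
  have b: "b = y*c - x*d + n*t" using t by simp
  have 1: "(a*e - b*f - c*g - d*h) - x*(a*g - b*h + c*e + d*f) - y*(a*h + b*g - c*f + d*e)
     = n * (e*s - f*t - g*(x*s + y*t) + h*(x*t - y*s)) + (x^2+y^2+1)*(- g*c - h*d)"
    unfolding a b by (simp add: algebra_simps power2_eq_square)
  have 2: "(a*f + b*e + c*h - d*g) - y*(a*g - b*h + c*e + d*f) + x*(a*h + b*g - c*f + d*e)
     = n * (e*t + f*s + g*(x*t - y*s) + h*(x*s + y*t)) + (x^2+y^2+1)*(c*h - d*g)"
    unfolding a b by (simp add: algebra_simps power2_eq_square)
  show ?thesis unfolding vv ww qmul.simps inL.simps 1 2 using r by auto
qed

lemma inL_nrm:
  assumes r: "n dvd x^2+y^2+1" and v: "inL n x y v"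
  shows "n dvd nrm v"
proof -
  obtain a b c d where vv: "v = (a,b,c,d)" by (cases v)
  obtain s where s: "a - x*c - y*d = n*s" using v vv by auto
  obtain t where t: "b - y*c + x*d = n*t" using v vv by auto
  have a: "a = x*c + y*d + n*s" using s by simp
  have b: "b = y*c - x*d + n*t" using t by simp
  have "nrm v = (x^2+y^2+1)*(c^2+d^2) + n*(2*s*(x*c+y*d) + 2*t*(y*c-x*d) + n*s^2 + n*t^2)"
    unfolding vv nrm.simps a b by (simp add: algebra_simps power2_eq_square)
  then show ?thesis using r by auto
qed

lemma round_ex:
  fixes M P :: int assumes "M > 0"
  shows "\<exists>a. - M \<le> 2*(P - M*a) \<and> 2*(P - M*a) < M"
proof -
  define a where "a = (2*P + M) div (2*M)"
  define rho where "rho = (2*P + M) mod (2*M)"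
  have e: "2*P + M = 2*M*a + rho" unfolding a_def rho_def by simp
  have "0 \<le> rho" "rho < 2*M" unfolding rho_def using assms by auto
  then show ?thesis using e by (intro exI[of _ a]) (auto simp: algebra_simps)
qed

lemma nrm_nonneg: "nrm v \<ge> 0"
  by (cases v) simp

lemma nrm_pos: "v \<noteq> (0,0,0,0) \<Longrightarrow> nrm v > 0"
proof -
  assume "v \<noteq> (0,0,0,0)"
  obtain a b c d where vv: "v = (a,b,c,d)" by (cases v)
  have "a \<noteq> 0 \<or> b \<noteq> 0 \<or> c \<noteq> 0 \<or> d \<noteq> 0" using \<open>v \<noteq> _\<close> vv by auto
  then show ?thesis unfolding vv nrm.simps
    by (auto simp: add_pos_nonneg add_nonneg_pos)
qed

lemma sq_le_of_bounds:
  fixes R M :: int assumes "- M \<le> 2*R" "2*R < M"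
  shows "(2*R)^2 \<le> M^2"
proof -
  have "\<bar>2*R\<bar> \<le> \<bar>M\<bar>" using assms by auto
  then show ?thesis by (simp add: abs_le_square_iff)
qed

lemma sq_eq_of_bounds:
  fixes R M :: int assumes "- M \<le> 2*R" "2*R < M" "(2*R)^2 = M^2"
  shows "2*R = - M"
proof -
  have "2*R = M \<or> 2*R = - M" using assms(3) power2_eq_iff by blast
  then show ?thesis using assms by auto
qed

lemma min_dvd:
  assumes r: "n dvd x^2+y^2+1" and qL: "inL n x y q" and q0: "q \<noteq> (0,0,0,0)"
    and mini: "\<And>w. inL n x y w \<Longrightarrow> w \<noteq> (0,0,0,0) \<Longrightarrow> nrm q \<le> nrm w"
    and vL: "inL n x y v"
  shows "nrm q dvd nrm v"
proof -
  define M where "M = nrm q"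
  have M0: "M > 0" unfolding M_def using nrm_pos[OF q0] .
  obtain P1 P2 P3 P4 where P: "qmul (qcnj q) v = (P1,P2,P3,P4)" by (cases "qmul (qcnj q) v")
  obtain a1 where a1: "- M \<le> 2*(P1 - M*a1)" "2*(P1 - M*a1) < M" using round_ex[OF M0] by blast
  obtain a2 where a2: "- M \<le> 2*(P2 - M*a2)" "2*(P2 - M*a2) < M" using round_ex[OF M0] by blast
  obtain a3 where a3: "- M \<le> 2*(P3 - M*a3)" "2*(P3 - M*a3) < M" using round_ex[OF M0] by blast
  obtain a4 where a4: "- M \<le> 2*(P4 - M*a4)" "2*(P4 - M*a4) < M" using round_ex[OF M0] by blast
  define R1 where "R1 = P1 - M*a1"
  define R2 where "R2 = P2 - M*a2"
  define R3 where "R3 = P3 - M*a3"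
  define R4 where "R4 = P4 - M*a4"
  note a1 = a1[folded R1_def] and a2 = a2[folded R2_def] and a3 = a3[folded R3_def] and a4 = a4[folded R4_def]
  define al where "al = (a1,a2,a3,a4)"
  define rr where "rr = qsub v (qmul q al)"
  have rrL: "inL n x y rr" unfolding rr_def by (intro inL_sub vL inL_mul r qL)
  have key: "qmul (qcnj q) rr = (R1, R2, R3, R4)"
  proof -
    obtain a b c d where qq: "q = (a,b,c,d)" by (cases q)
    obtain e f g h where vv: "v = (e,f,g,h)" by (cases v)
    show ?thesis using P unfolding rr_def al_def M_def qq vv R1_def R2_def R3_def R4_def
      by (simp add: algebra_simps power2_eq_square)
  qed
  have nr: "M * nrm rr = R1^2 + R2^2 + R3^2 + R4^2"
    using nrm_mul[of "qcnj q" rr] key nrm_cnj[of q] unfolding M_def by simp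
  have b1: "4*R1^2 \<le> M^2" using sq_le_of_bounds[OF a1] by (simp add: power_mult_distrib)
  have b2: "4*R2^2 \<le> M^2" using sq_le_of_bounds[OF a2] by (simp add: power_mult_distrib)
  have b3: "4*R3^2 \<le> M^2" using sq_le_of_bounds[OF a3] by (simp add: power_mult_distrib)
  have b4: "4*R4^2 \<le> M^2" using sq_le_of_bounds[OF a4] by (simp add: power_mult_distrib)
  have "4 * (M * nrm rr) = 4*R1^2 + 4*R2^2 + 4*R3^2 + 4*R4^2" unfolding nr by simp
  then have "4 * (M * nrm rr) \<le> 4 * M^2" using b1 b2 b3 b4 by linarith
  then have "M * nrm rr \<le> M * M" by (simp add: power2_eq_square)
  then have rle: "nrm rr \<le> M" using M0 by simp
  show ?thesis
  proof (cases "rr = (0,0,0,0)")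
    case True
    have "v = qmul q al"
    proof -
      obtain e f g h where vv: "v = (e,f,g,h)" by (cases v)
      obtain e' f' g' h' where ww: "qmul q al = (e',f',g',h')" by (cases "qmul q al")
      show ?thesis using True unfolding rr_def vv ww by simp
    qed
    then show ?thesis unfolding M_def[symmetric] using nrm_mul[of q al] M_def by simp
  next
    case False
    have "M \<le> nrm rr" using mini[OF rrL False] unfolding M_def .
    then have "nrm rr = M" using rle by simp
    then have s4: "4*R1^2 + 4*R2^2 + 4*R3^2 + 4*R4^2 = 4*M^2"
      using nr by (simp add: power2_eq_square)
    have "4*R1^2 = M^2" using s4 b1 b2 b3 b4 by linarith
    then have "(2*R1)^2 = M^2" by (simp add: power_mult_distrib)
    then have "2*R1 = - M" using sq_eq_of_bounds[OF a1] by simp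
    then have e1: "2*P1 = M*(2*a1 - 1)" unfolding R1_def by (simp add: algebra_simps)
    have "4*R2^2 = M^2" using s4 b1 b2 b3 b4 by linarith
    then have "(2*R2)^2 = M^2" by (simp add: power_mult_distrib)
    then have "2*R2 = - M" using sq_eq_of_bounds[OF a2] by simp
    then have e2: "2*P2 = M*(2*a2 - 1)" unfolding R2_def by (simp add: algebra_simps)
    have "4*R3^2 = M^2" using s4 b1 b2 b3 b4 by linarith
    then have "(2*R3)^2 = M^2" by (simp add: power_mult_distrib)
    then have "2*R3 = - M" using sq_eq_of_bounds[OF a3] by simp
    then have e3: "2*P3 = M*(2*a3 - 1)" unfolding R3_def by (simp add: algebra_simps)
    have "4*R4^2 = M^2" using s4 b1 b2 b3 b4 by linarith
    then have "(2*R4)^2 = M^2" by (simp add: power_mult_distrib)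
    then have "2*R4 = - M" using sq_eq_of_bounds[OF a4] by simp
    then have e4: "2*P4 = M*(2*a4 - 1)" unfolding R4_def by (simp add: algebra_simps)
    have "M * nrm v = P1^2 + P2^2 + P3^2 + P4^2"
      using nrm_mul[of "qcnj q" v] P nrm_cnj[of q] unfolding M_def by simp
    then have "4 * (M * nrm v) = (2*P1)^2 + (2*P2)^2 + (2*P3)^2 + (2*P4)^2"
      by (simp add: power_mult_distrib)
    also have "\<dots> = (M*(2*a1 - 1))^2 + (M*(2*a2 - 1))^2 + (M*(2*a3 - 1))^2 + (M*(2*a4 - 1))^2"
      unfolding e1 e2 e3 e4 ..
    also have "\<dots> = 4 * (M * (M * (1 + (a1^2 - a1) + (a2^2 - a2) + (a3^2 - a3) + (a4^2 - a4))))"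
      by (simp add: algebra_simps power2_eq_square)
    finally have "nrm v = M * (1 + (a1^2 - a1) + (a2^2 - a2) + (a3^2 - a3) + (a4^2 - a4))"
      using M0 by simp
    then show ?thesis unfolding M_def by simp
  qed
qed

lemma sq_mod4: fixes x :: int shows "\<exists>A e. x^2 = 4*A + e \<and> (e = 0 \<or> e = 1)"
proof (cases "even x")
  case True
  then obtain a where "x = 2*a" by (auto elim: evenE)
  then show ?thesis by (intro exI[of _ "a^2"] exI[of _ 0]) (simp add: power2_eq_square)
next
  case False
  then obtain a where "x = 2*a + 1" by (auto elim: oddE)
  then show ?thesis by (intro exI[of _ "a^2+a"] exI[of _ 1]) (simp add: power2_eq_square algebra_simps)
qed

lemma not4: fixes x y :: int shows "\<not> 4 dvd x^2 + y^2 + 1"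
proof
  assume h: "4 dvd x^2 + y^2 + 1"
  obtain A e where A: "x^2 = 4*A + e" "e = 0 \<or> e = 1" using sq_mod4 by blast
  obtain B f where B: "y^2 = 4*B + f" "f = 0 \<or> f = 1" using sq_mod4 by blast
  have "x^2 + y^2 + 1 = 4*(A+B) + (e + f + 1)" using A B by simp
  then have "4 dvd (x^2 + y^2 + 1) - 4*(A+B)" using h by (intro dvd_diff) auto
  then have "4 dvd e + f + 1" using \<open>x^2 + y^2 + 1 = _\<close> by simp
  then show False using A(2) B(2) by auto
qed

lemma rep_exists:
  assumes n0: "n > 0" and r: "n dvd x^2+y^2+1"
  shows "\<exists>v. inL n x y v \<and> nrm v = n"
proof -
  define S where "S = {m::nat. \<exists>v. inL n x y v \<and> v \<noteq> (0,0,0,0) \<and> nrm v = int m}"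
  have "inL n x y (n,0,0,0)" by simp
  then have "nat (n^2) \<in> S" unfolding S_def using n0
    by (intro CollectI exI[of _ "(n,0,0,0)"]) simp
  then have "Least (\<lambda>m. m \<in> S) \<in> S" by (rule LeastI)
  then obtain q where qL: "inL n x y q" and q0: "q \<noteq> (0,0,0,0)" and qm: "nrm q = int (Least (\<lambda>m. m \<in> S))"
    unfolding S_def by blast
  have mini: "nrm q \<le> nrm w" if "inL n x y w" "w \<noteq> (0,0,0,0)" for w
  proof -
    have "nat (nrm w) \<in> S" unfolding S_def using that nrm_nonneg[of w]
      by (intro CollectI exI[of _ w]) simp
    then have "Least (\<lambda>m. m \<in> S) \<le> nat (nrm w)" by (rule Least_le)
    then show ?thesis using qm nrm_nonneg[of w] by linarith
  qed
  have md: "nrm q dvd nrm v" if "inL n x y v" for v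
    using min_dvd[OF r qL q0 mini that] by blast
  obtain k where k: "nrm q = n * k" using inL_nrm[OF r qL] by (auto elim: dvdE)
  have "k > 0" using nrm_pos[OF q0] k n0 by (simp add: zero_less_mult_iff)
  have d1: "n*k dvd n*n" using md[of "(n,0,0,0)"] k by (simp add: power2_eq_square)
  then have kn: "k dvd n" using n0 by simp
  have d2: "n*k dvd x^2+y^2+1" using md[of "(x,y,1,0)"] k by simp
  have d3: "n*k dvd (x+n)^2+y^2+1" using md[of "(x+n,y,1,0)"] k by simp
  have d4: "n*k dvd x^2+(y+n)^2+1" using md[of "(x,y+n,1,0)"] k by simp
  have "(x+n)^2+y^2+1 = (x^2+y^2+1) + n*(2*x+n)" by (simp add: power2_eq_square algebra_simps)
  then have "n*k dvd ((x+n)^2+y^2+1) - (x^2+y^2+1)" using d2 d3 by (intro dvd_diff)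
  then have "n*k dvd n*(2*x+n)" using \<open>(x+n)^2+y^2+1 = _\<close> by simp
  then have kx: "k dvd 2*x+n" using n0 by simp
  have "x^2+(y+n)^2+1 = (x^2+y^2+1) + n*(2*y+n)" by (simp add: power2_eq_square algebra_simps)
  then have "n*k dvd (x^2+(y+n)^2+1) - (x^2+y^2+1)" using d2 d4 by (intro dvd_diff)
  then have "n*k dvd n*(2*y+n)" using \<open>x^2+(y+n)^2+1 = _\<close> by simp
  then have ky: "k dvd 2*y+n" using n0 by simp
  have "k = 1"
  proof (rule ccontr)
    assume "k \<noteq> 1"
    then have "\<bar>k\<bar> \<noteq> 1" using \<open>k > 0\<close> by simp
    then obtain p where p: "prime p" "p dvd k" by (rule prime_factor_int)
    have pn: "p dvd n" using p(2) kn by (rule dvd_trans)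
    have "p dvd 2*x+n" using p(2) kx by (rule dvd_trans)
    then have "p dvd (2*x+n) - n" using pn by (rule dvd_diff)
    then have px: "p dvd 2*x" by simp
    have "p dvd 2*y+n" using p(2) ky by (rule dvd_trans)
    then have "p dvd (2*y+n) - n" using pn by (rule dvd_diff)
    then have py: "p dvd 2*y" by simp
    have "p dvd n*k" using p(2) by simp
    then have pr: "p dvd x^2+y^2+1" using d2 by (rule dvd_trans)
    show False
    proof (cases "p = 2")
      case True
      then have "2*2 dvd n*k" using pn p(2) by (intro mult_dvd_mono) auto
      then have "4 dvd x^2+y^2+1" using d2 by (simp add: dvd_trans)
      then show False using not4 by blast
    next
      case False
      have "\<not> p dvd 2"
      proof
        assume "p dvd 2"
        then have "p \<le> 2" by (simp add: zdvd_imp_le)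
        moreover have "p \<ge> 2" using p(1) prime_ge_2_int by blast
        ultimately show False using False by simp
      qed
      have "p dvd x" using px p(1) \<open>\<not> p dvd 2\<close> by (simp add: prime_dvd_mult_iff)
      moreover have "p dvd y" using py p(1) \<open>\<not> p dvd 2\<close> by (simp add: prime_dvd_mult_iff)
      ultimately have "p dvd x^2+y^2" by (simp add: power2_eq_square)
      then have "p dvd (x^2+y^2+1) - (x^2+y^2)" using pr by (intro dvd_diff)
      then have "p dvd 1" by simp
      then show False using p(1) using not_prime_unit by blast
    qed
  qed
  then have "nrm q = n" using k by simp
  then show ?thesis using qL by blast
qed

lemma small_dvd_zero:
  fixes n z :: int assumes "n \<ge> 2" "n dvd z" "z^2 \<le> n"
  shows "z = 0"
proof (rule ccontr)
  assume z: "z \<noteq> 0"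
  obtain j where j: "z = n*j" using assms(2) by (auto elim: dvdE)
  then have "j \<noteq> 0" using z by auto
  then have "0 < j^2" by simp
  then have "1 \<le> j^2" by linarith
  have "n*n*1 \<le> n*n*j^2" using \<open>1 \<le> j^2\<close> assms(1) by (intro mult_left_mono) auto
  also have "\<dots> = z^2" using j by (simp add: power2_eq_square)
  finally have "n*n \<le> n" using assms(3) by simp
  moreover have "n*2 \<le> n*n" using assms(1) by (intro mult_left_mono) auto
  ultimately show False using assms(1) by linarith
qed

lemma div_gcd_helper:
  fixes n x c :: int assumes "n > 0" "n dvd x*c"
  shows "(n div gcd x n) dvd c" and "n div gcd x n > 0" and "n div gcd x n = 1 \<Longrightarrow> n dvd x"
proof -
  define h where "h = gcd x n"
  have h0: "h > 0" unfolding h_def using assms(1) by simp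
  have hn: "h * (n div h) = n" unfolding h_def by simp
  have hx: "h * (x div h) = x" unfolding h_def by simp
  have cop: "coprime (x div h) (n div h)" unfolding h_def
    using assms(1) by (intro div_gcd_coprime) auto
  have "h * ((x div h) * c) = x * c" using hx by (simp add: mult.assoc[symmetric])
  then have "h * (n div h) dvd h * ((x div h) * c)" using assms(2) by (simp only: hn)
  then have "(n div h) dvd (x div h) * c" using h0 by simp
  then show "(n div gcd x n) dvd c" unfolding h_def[symmetric]
    using cop by (simp add: coprime_dvd_mult_right_iff coprime_commute)
  show "n div gcd x n > 0" unfolding h_def[symmetric]
  proof -
    have "0 < h * (n div h)" using hn assms(1) by simp
    then show "0 < n div h" using h0 by (simp add: zero_less_mult_iff)
  qed
  show "n div gcd x n = 1 \<Longrightarrow> n dvd x"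
  proof -
    assume "n div gcd x n = 1"
    then have "n = h" using hn unfolding h_def by simp
    then show "n dvd x" unfolding h_def by (metis gcd_dvd1)
  qed
qed

lemma prim:
  assumes n2: "n \<ge> 2" and r: "n dvd x^2+y^2+1"
    and vL: "inL n x y (a,b,c,d)" and nv: "nrm (a,b,c,d) = n"
  shows "gcd (gcd a b) (gcd c d) = 1"
proof -
  define g where "g = gcd (gcd a b) (gcd c d)"
  have g0: "g \<ge> 0" unfolding g_def by simp
  have ga: "g dvd a" and gb: "g dvd b" and gc: "g dvd c" and gd: "g dvd d" unfolding g_def
    by (meson dvd_trans gcd_dvd1 gcd_dvd2)+
  obtain a' where a': "a = g*a'" using ga by (auto elim: dvdE)
  obtain b' where b': "b = g*b'" using gb by (auto elim: dvdE)
  obtain c' where c': "c = g*c'" using gc by (auto elim: dvdE)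
  obtain d' where d': "d = g*d'" using gd by (auto elim: dvdE)
  define m where "m = nrm (a',b',c',d')"
  have nm: "n = g*(g*m)" using nv unfolding a' b' c' d' m_def by (simp add: power2_eq_square algebra_simps)
  have "g \<noteq> 0" using nm n2 by auto
  then have gp: "g > 0" using g0 by simp
  have "0 < g*(g*m)" using nm n2 by simp
  then have "0 < g*m" using gp by (simp add: zero_less_mult_iff)
  then have "m > 0" using gp by (simp add: zero_less_mult_iff)
  have e1: "a - x*c - y*d = g*(a' - x*c' - y*d')" unfolding a' c' d' by (simp add: algebra_simps)
  have e2: "b - y*c + x*d = g*(b' - y*c' + x*d')" unfolding b' c' d' by (simp add: algebra_simps)
  have "g*(g*m) dvd g*(a' - x*c' - y*d')" using vL e1 nm by simp
  then have h1: "g*m dvd a' - x*c' - y*d'" using gp by simp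
  have "g*(g*m) dvd g*(b' - y*c' + x*d')" using vL e2 nm by simp
  then have h2: "g*m dvd b' - y*c' + x*d'" using gp by simp
  have L': "inL (g*m) x y (a',b',c',d')" using h1 h2 by simp
  have "g*m dvd n" using nm by simp
  then have r': "g*m dvd x^2+y^2+1" using r by (rule dvd_trans)
  have "g*m dvd m" using inL_nrm[OF r' L'] unfolding m_def .
  then have "g*m \<le> m" using \<open>m > 0\<close> by (simp add: zdvd_imp_le)
  then have "g \<le> 1" using \<open>m > 0\<close> by (simp add: mult_le_cancel_right1)
  then show ?thesis using gp unfolding g_def[symmetric] by simp
qed

lemma zeros:
  assumes n2: "n \<ge> 2" and r: "n dvd x^2+y^2+1" and cy: "coprime y n" and nx: "\<not> n dvd x"
    and vL: "inL n x y (a,b,c,d)" and nv: "nrm (a,b,c,d) = n"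
  shows "length (filter (\<lambda>z. z = 0) [a,b,c,d]) \<le> 1"
proof -
  have G: "gcd (gcd a b) (gcd c d) = 1" by (rule prim[OF n2 r vL nv])
  have A: "n dvd a - x*c - y*d" and B: "n dvd b - y*c + x*d" using vL by auto
  have nv': "a^2+b^2+c^2+d^2 = n" using nv by simp
  have z: "0 \<le> a^2" "0 \<le> b^2" "0 \<le> c^2" "0 \<le> d^2" by simp_all
  have sa: "a^2 \<le> n" and sb: "b^2 \<le> n" and sc: "c^2 \<le> n" and sd: "d^2 \<le> n"
    using nv' z by linarith+
  have nz: "\<not> (a = 0 \<and> b = 0 \<and> c = 0 \<and> d = 0)" using nv n2 by auto
  have cn: "coprime n y" using cy by (simp add: coprime_commute)
  have K: "n dvd (x^2+y^2+1) * t" for t using r by simp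
  have p1: "\<not> (a = 0 \<and> b = 0)"
  proof
    assume h: "a = 0 \<and> b = 0"
    have "a - x*c - y*d = -(x*c + y*d)" using h by simp
    then have u: "n dvd x*c + y*d" using A by (metis dvd_minus_iff)
    have "b - y*c + x*d = -(y*c - x*d)" using h by simp
    then have w: "n dvd y*c - x*d" using B by (metis dvd_minus_iff)
    have "c = (x^2+y^2+1)*c - x*(x*c+y*d) - y*(y*c - x*d)" by (simp add: algebra_simps power2_eq_square)
    moreover have "n dvd (x^2+y^2+1)*c - x*(x*c+y*d) - y*(y*c - x*d)"
      by (rule dvd_diff[OF dvd_diff[OF K[of c] dvd_mult[OF u]] dvd_mult[OF w]])
    ultimately have "n dvd c" by simp
    then have "c = 0" using small_dvd_zero[OF n2 _ sc] by simp
    have "d = (x^2+y^2+1)*d - y*(x*c+y*d) + x*(y*c - x*d)" by (simp add: algebra_simps power2_eq_square)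
    moreover have "n dvd (x^2+y^2+1)*d - y*(x*c+y*d) + x*(y*c - x*d)"
      by (rule dvd_add[OF dvd_diff[OF K[of d] dvd_mult[OF u]] dvd_mult[OF w]])
    ultimately have "n dvd d" by simp
    then have "d = 0" using small_dvd_zero[OF n2 _ sd] by simp
    then show False using nz h \<open>c = 0\<close> by simp
  qed
  have p2: "\<not> (c = 0 \<and> d = 0)"
  proof
    assume h: "c = 0 \<and> d = 0"
    then have "n dvd a" "n dvd b" using A B by auto
    then have "a = 0" "b = 0" using small_dvd_zero[OF n2 _ sa] small_dvd_zero[OF n2 _ sb] by auto
    then show False using nz h by simp
  qed
  have p3: "\<not> (a = 0 \<and> c = 0)"
  proof
    assume h: "a = 0 \<and> c = 0"
    then have "n dvd y*d" using A by simp
    then have "n dvd d" using cn by (simp add: coprime_dvd_mult_right_iff)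
    then have "d = 0" using small_dvd_zero[OF n2 _ sd] by simp
    then have "n dvd b" using B h by simp
    then have "b = 0" using small_dvd_zero[OF n2 _ sb] by simp
    then show False using nz h \<open>d = 0\<close> by simp
  qed
  have p4: "\<not> (b = 0 \<and> d = 0)"
  proof
    assume h: "b = 0 \<and> d = 0"
    then have "n dvd y*c" using B by simp
    then have "n dvd c" using cn by (simp add: coprime_dvd_mult_right_iff)
    then have "c = 0" using small_dvd_zero[OF n2 _ sc] by simp
    then have "n dvd a" using A h by simp
    then have "a = 0" using small_dvd_zero[OF n2 _ sa] by simp
    then show False using nz h \<open>c = 0\<close> by simp
  qed
  have n0: "n > 0" using n2 by simp
  have p5: "\<not> (a = 0 \<and> d = 0)"
  proof
    assume h: "a = 0 \<and> d = 0"
    then have "n dvd x*c" using A by simp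
    note D = div_gcd_helper[OF n0 this]
    define n' where "n' = n div gcd x n"
    have "n' dvd n" unfolding n'_def by (metis dvd_def dvd_div_mult_self gcd_dvd2 mult.commute)
    have "n' dvd c" using D(1) unfolding n'_def .
    have "n' dvd b - y*c" using B h \<open>n' dvd n\<close> by (auto intro: dvd_trans)
    moreover have "n' dvd y*c" using \<open>n' dvd c\<close> by simp
    ultimately have "n' dvd (b - y*c) + y*c" by (rule dvd_add)
    then have "n' dvd b" by simp
    then have "n' dvd gcd (gcd a b) (gcd c d)" using h \<open>n' dvd c\<close> by simp
    then have "n' dvd 1" using G by simp
    then have "n' = 1" using D(2) unfolding n'_def by simp
    then show False using D(3) nx unfolding n'_def by simp
  qed
  have p6: "\<not> (b = 0 \<and> c = 0)"
  proof
    assume h: "b = 0 \<and> c = 0"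
    then have "n dvd x*d" using B by simp
    note D = div_gcd_helper[OF n0 this]
    define n' where "n' = n div gcd x n"
    have "n' dvd n" unfolding n'_def by (metis dvd_def dvd_div_mult_self gcd_dvd2 mult.commute)
    have "n' dvd d" using D(1) unfolding n'_def .
    have "n' dvd a - y*d" using A h \<open>n' dvd n\<close> by (auto intro: dvd_trans)
    moreover have "n' dvd y*d" using \<open>n' dvd d\<close> by simp
    ultimately have "n' dvd (a - y*d) + y*d" by (rule dvd_add)
    then have "n' dvd a" by simp
    then have "n' dvd gcd (gcd a b) (gcd c d)" using h \<open>n' dvd d\<close> by simp
    then have "n' dvd 1" using G by simp
    then have "n' = 1" using D(2) unfolding n'_def by simp
    then show False using D(3) nx unfolding n'_def by simp
  qed
  show ?thesis using p1 p2 p3 p4 p5 p6 by auto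
qed

definition Sx :: "int \<Rightarrow> bool" where
  "Sx n = (\<exists>x y. n dvd x^2+y^2+1 \<and> coprime y n)"
definition Tx :: "int \<Rightarrow> bool" where
  "Tx n = (\<exists>x y. n dvd x^2+y^2+1 \<and> coprime y n \<and> \<not> n dvd x)"

lemma small_mult_zero:
  fixes p z :: int assumes "p dvd z" "\<bar>z\<bar> < p" shows "z = 0"
proof (rule ccontr)
  assume "z \<noteq> 0"
  then have "\<bar>p\<bar> \<le> \<bar>z\<bar>" using assms(1) by (rule dvd_imp_le_int)
  then show False using assms(2) by linarith
qed

lemma sq_inj:
  fixes p :: int assumes p: "prime p" and x: "0 \<le> x" "2*x < p" and x': "0 \<le> x'" "2*x' < p"
    and d: "p dvd x^2 - x'^2"
  shows "x = x'"
proof -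
  have "x^2 - x'^2 = (x - x')*(x + x')" by (simp add: algebra_simps power2_eq_square)
  then have "p dvd x - x' \<or> p dvd x + x'" using d p by (simp add: prime_dvd_mult_iff)
  then show ?thesis
  proof
    assume "p dvd x - x'"
    then have "x - x' = 0" using x x' by (intro small_mult_zero[of p]) auto
    then show ?thesis by simp
  next
    assume "p dvd x + x'"
    then have "x + x' = 0" using x x' by (intro small_mult_zero[of p]) auto
    then show ?thesis using x x' by simp
  qed
qed

lemma pigeon:
  fixes p :: int assumes p: "prime p" and p2: "p \<noteq> 2"
  shows "\<exists>x y. p dvd x^2+y^2+1"
proof (rule ccontr)
  assume nex: "\<not> ?thesis"
  have p0: "p \<ge> 2" using p prime_ge_2_int by blast
  have odd: "odd p" using p p2 p0 prime_odd_int[OF p] by simp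
  define h where "h = (p - 1) div 2"
  obtain k where "p = 2*k + 1" using odd by (auto elim: oddE)
  then have h2: "2*h = p - 1" unfolding h_def by simp
  define I where "I = {0..h}"
  define f where "f = (\<lambda>x::int. x^2 mod p)"
  define g where "g = (\<lambda>y::int. (-1 - y^2) mod p)"
  have injf: "inj_on f I"
  proof (rule inj_onI)
    fix x x' assume "x \<in> I" "x' \<in> I" "f x = f x'"
    then show "x = x'" unfolding I_def f_def using h2
      by (intro sq_inj[OF p]) (auto simp: mod_eq_dvd_iff)
  qed
  have injg: "inj_on g I"
  proof (rule inj_onI)
    fix x x' assume a: "x \<in> I" "x' \<in> I" "g x = g x'"
    then have "p dvd (-1 - x^2) - (-1 - x'^2)" unfolding g_def by (simp add: mod_eq_dvd_iff)
    then have "p dvd - (x^2 - x'^2)" by (simp add: algebra_simps)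
    then have "p dvd x^2 - x'^2" by (simp only: dvd_minus_iff)
    then show "x = x'" using a unfolding I_def using h2
      by (intro sq_inj[OF p]) auto
  qed
  have disj: "f ` I \<inter> g ` I = {}"
  proof (rule ccontr)
    assume "f ` I \<inter> g ` I \<noteq> {}"
    then obtain x y where "f x = g y" by blast
    then have "p dvd x^2 - (-1 - y^2)" unfolding f_def g_def by (simp add: mod_eq_dvd_iff)
    then have "p dvd x^2 + y^2 + 1" by (simp add: algebra_simps)
    then show False using nex by blast
  qed
  have sub: "f ` I \<union> g ` I \<subseteq> {0..p-1}"
  proof -
    have "a mod p \<in> {0..p-1}" for a :: int using p0 pos_mod_sign[of p a] pos_mod_bound[of p a] by simp
    then show ?thesis unfolding f_def g_def by blast
  qed
  have cI: "card I = nat (h + 1)" unfolding I_def by simp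
  have "card (f ` I \<union> g ` I) = card (f ` I) + card (g ` I)"
  proof -
    have fI: "finite I" unfolding I_def by simp
    show ?thesis using card_Un_disjoint[OF finite_imageI[OF fI] finite_imageI[OF fI] disj] .
  qed
  also have "\<dots> = 2 * nat (h+1)" using card_image[OF injf] card_image[OF injg] cI by simp
  finally have "2 * nat (h+1) \<le> card {0..p-1}" using card_mono[OF _ sub] by simp
  then have "2 * nat (h+1) \<le> nat p" by simp
  then show False using h2 p0 by linarith
qed

lemma T_from_sqrt:
  fixes p z :: int assumes p: "prime p" and p5: "p > 5" and pz: "p dvd z^2 + 1"
  shows "Tx p"
proof -
  have "\<not> p dvd 5"
  proof
    assume "p dvd 5"
    then have "p \<le> 5" by (rule zdvd_imp_le) simp
    then show False using p5 by simp
  qed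
  then have "coprime 5 p" using p by (simp add: prime_imp_coprime coprime_commute)
  then obtain w where "[5*w = 1] (mod p)" using cong_solve_coprime_int by blast
  then have "p dvd 5*w - 1" unfolding cong_iff_dvd_diff .
  then obtain k where "5*w - 1 = p*k" by (auto elim: dvdE)
  then have k: "5*w = 1 + p*k" by simp
  define x where "x = 3*z*w"
  define y where "y = 4*z*w"
  have eq: "x^2+y^2+1 = (z^2+1) + z^2*p*(2*k + p*k^2)"
  proof -
    have "x^2+y^2+1 = z^2*(5*w)^2 + 1" unfolding x_def y_def by (simp add: algebra_simps power2_eq_square)
    also have "\<dots> = (z^2+1) + z^2*p*(2*k + p*k^2)" unfolding k by (simp add: algebra_simps power2_eq_square)
    finally show ?thesis .
  qed
  have d: "p dvd x^2+y^2+1" unfolding eq by (rule dvd_add[OF pz]) simp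
  have nz: "\<not> p dvd z"
  proof
    assume "p dvd z"
    then have "p dvd z^2" by (simp add: power2_eq_square)
    then have "p dvd (z^2+1) - z^2" using pz by (intro dvd_diff)
    then show False using p by (simp add: not_prime_unit)
  qed
  have nw: "\<not> p dvd w"
  proof
    assume "p dvd w"
    then have "p dvd 5*w - p*k" by simp
    then show False using p k by (simp add: not_prime_unit)
  qed
  have n3: "\<not> p dvd 3"
  proof
    assume "p dvd 3"
    then have "p \<le> 3" by (rule zdvd_imp_le) simp
    then show False using p5 by simp
  qed
  have n4: "\<not> p dvd 4"
  proof
    assume "p dvd 4"
    then have "p \<le> 4" by (rule zdvd_imp_le) simp
    then show False using p5 by simp
  qed
  have "\<not> p dvd x" unfolding x_def using p nz nw n3 by (simp add: prime_dvd_mult_iff)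
  moreover have "\<not> p dvd y" unfolding y_def using p nz nw n4 by (simp add: prime_dvd_mult_iff)
  then have "coprime y p" using p by (simp add: prime_imp_coprime coprime_commute)
  ultimately show ?thesis unfolding Tx_def using d by blast
qed

lemma prime_T:
  fixes p :: int assumes p: "prime p" and "p \<noteq> 2" "p \<noteq> 5"
  shows "Tx p"
proof (cases "p = 3")
  case True
  then show ?thesis unfolding Tx_def by (intro exI[of _ 1] exI[of _ 1]) simp
next
  case False
  have "p \<ge> 2" using p prime_ge_2_int by blast
  have "p \<noteq> 4"
  proof
    assume "p = 4"
    then have "2 dvd p" by simp
    then have "2 = p" using p by (intro primes_dvd_imp_eq) auto
    then show False using \<open>p = 4\<close> by simp
  qed
  then have p5: "p > 5" using \<open>p \<ge> 2\<close> False assms by auto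
  obtain x0 y0 where d: "p dvd x0^2+y0^2+1" using pigeon[OF p \<open>p \<noteq> 2\<close>] by blast
  show ?thesis
  proof (cases "p dvd y0")
    case True
    then have "p dvd y0^2" by (simp add: power2_eq_square)
    then have "p dvd (x0^2+y0^2+1) - y0^2" using d by (intro dvd_diff)
    then show ?thesis using T_from_sqrt[OF p p5, of x0] by (simp add: algebra_simps)
  next
    case ny: False
    show ?thesis
    proof (cases "p dvd x0")
      case True
      then have "p dvd x0^2" by (simp add: power2_eq_square)
      then have "p dvd (x0^2+y0^2+1) - x0^2" using d by (intro dvd_diff)
      then show ?thesis using T_from_sqrt[OF p p5, of y0] by (simp add: algebra_simps)
    next
      case False
      have "coprime y0 p" using ny p by (simp add: prime_imp_coprime coprime_commute)
      then show ?thesis unfolding Tx_def using d False by blast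
    qed
  qed
qed

lemma shift_dvd:
  fixes m A B X Y :: int
  assumes "m dvd A^2+B^2+1" "m dvd X - A" "m dvd Y - B"
  shows "m dvd X^2+Y^2+1"
proof -
  obtain s where s: "X - A = m*s" using assms(2) by (auto elim: dvdE)
  obtain t where t: "Y - B = m*t" using assms(3) by (auto elim: dvdE)
  have X: "X = A + m*s" using s by simp
  have Y: "Y = B + m*t" using t by simp
  have eq: "X^2+Y^2+1 = (A^2+B^2+1) + m*(2*A*s + m*s^2 + 2*B*t + m*t^2)"
    unfolding X Y by (simp add: algebra_simps power2_eq_square)
  show ?thesis unfolding eq by (rule dvd_add[OF assms(1)]) simp
qed

lemma shift_coprime:
  fixes m B Y :: int
  assumes "coprime B m" "m dvd Y - B"
  shows "coprime Y m"
proof -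
  obtain t where t: "Y - B = m*t" using assms(2) by (auto elim: dvdE)
  then have Y: "Y = t*m + B" by (simp add: algebra_simps)
  have "gcd m (t*m + B) = gcd m B" by (rule gcd_add_mult)
  then show ?thesis using assms(1) unfolding Y by (simp add: coprime_iff_gcd_eq_1 gcd.commute)
qed

lemma crt_pair:
  fixes m p a b :: int assumes "coprime m p"
  shows "\<exists>z. m dvd z - a \<and> p dvd z - b"
proof -
  have "coprime p m" using assms by (simp add: coprime_commute)
  then obtain u where "[p*u = 1] (mod m)" using cong_solve_coprime_int by blast
  then have u: "m dvd p*u - 1" unfolding cong_iff_dvd_diff .
  define z where "z = b + p*u*(a - b)"
  have "z - a = (p*u - 1)*(a - b)" unfolding z_def by (simp add: algebra_simps)
  then have "m dvd z - a" using u by simp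
  moreover have "z - b = p*(u*(a-b))" unfolding z_def by (simp add: algebra_simps)
  then have "p dvd z - b" by simp
  ultimately show ?thesis by blast
qed

lemma crt_comb:
  fixes m p :: int assumes cop: "coprime m p"
    and h1: "m dvd x1^2+y1^2+1" "coprime y1 m"
    and h2: "p dvd x2^2+y2^2+1" "coprime y2 p"
  shows "\<exists>x y. (m*p) dvd x^2+y^2+1 \<and> coprime y (m*p) \<and> m dvd x - x1 \<and> p dvd x - x2"
proof -
  obtain x where x: "m dvd x - x1" "p dvd x - x2" using crt_pair[OF cop] by blast
  obtain y where y: "m dvd y - y1" "p dvd y - y2" using crt_pair[OF cop] by blast
  have "m dvd x^2+y^2+1" using shift_dvd[OF h1(1) x(1) y(1)] .
  moreover have "p dvd x^2+y^2+1" using shift_dvd[OF h2(1) x(2) y(2)] .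
  ultimately have "m*p dvd x^2+y^2+1" using cop by (rule divides_mult)
  moreover have "coprime y m" using shift_coprime[OF h1(2) y(1)] .
  moreover have "coprime y p" using shift_coprime[OF h2(2) y(2)] .
  ultimately show ?thesis using x by auto
qed

lemma crt_S: "coprime m p \<Longrightarrow> Sx m \<Longrightarrow> Sx p \<Longrightarrow> Sx (m*p)"
  unfolding Sx_def using crt_comb by blast

lemma crt_T1:
  assumes "coprime m p" "Tx m" "Sx p" shows "Tx (m*p)"
proof -
  obtain x1 y1 where h1: "m dvd x1^2+y1^2+1" "coprime y1 m" "\<not> m dvd x1" using assms(2) unfolding Tx_def by blast
  obtain x2 y2 where h2: "p dvd x2^2+y2^2+1" "coprime y2 p" using assms(3) unfolding Sx_def by blast
  obtain x y where xy: "(m*p) dvd x^2+y^2+1" "coprime y (m*p)" "m dvd x - x1"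
    using crt_comb[OF assms(1) h1(1,2) h2] by blast
  have "\<not> m*p dvd x"
  proof
    assume "m*p dvd x"
    then have "m dvd x" by (rule dvd_mult_left)
    then have "m dvd x - (x - x1)" using xy(3) by (rule dvd_diff)
    then show False using h1(3) by simp
  qed
  then show ?thesis unfolding Tx_def using xy by blast
qed

lemma crt_T2:
  assumes "coprime m p" "Sx m" "Tx p" shows "Tx (m*p)"
  using crt_T1[of p m] assms by (simp add: coprime_commute mult.commute)

lemma lift_T:
  fixes p m :: int
  assumes p: "prime p" and p2: "p \<noteq> 2" and pm: "p dvd m" and m0: "m > 0" and S: "Sx m"
  shows "Tx (p*m)"
proof -
  obtain x y where r: "m dvd x^2+y^2+1" and cy: "coprime y m" using S unfolding Sx_def by blast
  obtain r where rr: "x^2+y^2+1 = m*r" using r by (auto elim: dvdE)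
  obtain k where mk: "m = p*k" using pm by (auto elim: dvdE)
  have cyp: "coprime y p" using cy unfolding mk by simp
  have "\<not> p dvd 2"
  proof
    assume "p dvd 2"
    then have "p \<le> 2" by (rule zdvd_imp_le) simp
    moreover have "p \<ge> 2" using p prime_ge_2_int by blast
    ultimately have "p = 2" by simp
    then show False using p2 by simp
  qed
  then have "coprime p 2" by (rule prime_imp_coprime[OF p])
  then have "coprime 2 p" by (simp only: coprime_commute)
  then have "coprime (2*y) p" using cyp by (simp only: coprime_mult_left_iff)
  then obtain u where "[(2*y)*u = 1] (mod p)" using cong_solve_coprime_int by blast
  then have u: "p dvd 2*y*u - 1" unfolding cong_iff_dvd_diff by simp
  define s :: int where "s = (if p*m dvd x then 1 else 0)"
  define t where "t = - (r + 2*x*s)*u"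
  define X where "X = x + m*s"
  define Y where "Y = y + m*t"
  have eq0: "X^2+Y^2+1 = (x^2+y^2+1) + m*(2*x*s + 2*y*t + m*(s^2+t^2))"
    unfolding X_def Y_def by (simp add: algebra_simps power2_eq_square)
  have e2: "2*x*s + 2*y*t = (r + 2*x*s)*(1 - 2*y*u) - r" unfolding t_def by (simp add: algebra_simps)
  have eq: "X^2+Y^2+1 = m*((r + 2*x*s)*(1 - 2*y*u) + m*(s^2+t^2))"
    unfolding eq0 e2 rr by (simp add: algebra_simps)
  have "p dvd (r + 2*x*s)*(1 - 2*y*u)"
  proof -
    have "p dvd -(2*y*u - 1)" using u by (simp only: dvd_minus_iff)
    then have "p dvd 1 - 2*y*u" by (simp add: algebra_simps)
    then show ?thesis by (rule dvd_mult)
  qed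
  moreover have "p dvd m*(s^2+t^2)" using pm by (rule dvd_mult2)
  ultimately have "p dvd (r + 2*x*s)*(1 - 2*y*u) + m*(s^2+t^2)" by (rule dvd_add)
  then have "p*m dvd ((r + 2*x*s)*(1 - 2*y*u) + m*(s^2+t^2))*m" by (rule mult_dvd_mono) simp
  then have d: "p*m dvd X^2+Y^2+1" unfolding eq by (simp only: mult.commute)
  have "Y - y = m*t" unfolding Y_def by simp
  then have "m dvd Y - y" by simp
  with cy have cYm: "coprime Y m" by (rule shift_coprime)
  then have "coprime Y (p*k)" by (simp only: mk)
  then have cYp: "coprime Y p" by (rule coprime_mult_right_iff[THEN iffD1, THEN conjunct1])
  have cY: "coprime Y (p*m)" using cYp cYm by (rule coprime_mult_right_iff[THEN iffD2, OF conjI])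
  have nX: "\<not> p*m dvd X"
  proof (cases "p*m dvd x")
    case True
    show ?thesis
    proof
      assume "p*m dvd X"
      then have "p*m dvd X - x" using True by (rule dvd_diff)
      then have "p*m dvd m*1" unfolding X_def s_def using True by simp
      then have "\<bar>p\<bar> = 1" using m0 by simp
      then show False using prime_ge_2_int[OF p] by simp
    qed
  next
    case False
    then show ?thesis unfolding X_def s_def by simp
  qed
  show ?thesis unfolding Tx_def using d cY nX by blast
qed

lemma T_S: "Tx n \<Longrightarrow> Sx n" unfolding Tx_def Sx_def by blast

lemma prime_S: fixes p :: int assumes "prime p" shows "Sx p"
proof -
  consider "p = 2" | "p = 5" | "p \<noteq> 2 \<and> p \<noteq> 5" by blast
  then show ?thesis
  proof cases
    case 1 then show ?thesis unfolding Sx_def by (intro exI[of _ 0] exI[of _ 1]) simp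
  next
    case 2 then show ?thesis unfolding Sx_def by (intro exI[of _ 0] exI[of _ 2]) simp
  next
    case 3 then show ?thesis using prime_T[OF assms] T_S by blast
  qed
qed

lemma ST:
  fixes n :: int
  shows "n > 0 \<Longrightarrow> \<not> 4 dvd n \<Longrightarrow> Sx n \<and> (n \<notin> {1,2,5,10} \<longrightarrow> Tx n)"
proof (induction "nat n" arbitrary: n rule: less_induct)
  case less
  show ?case
  proof (cases "n = 1")
    case True
    then show ?thesis unfolding Sx_def by (intro conjI exI[of _ 0]) auto
  next
    case False
    then have "\<bar>n\<bar> \<noteq> 1" using less.prems by simp
    then obtain p where p: "prime p" "p dvd n" by (rule prime_factor_int)
    have p2: "p \<ge> 2" using p prime_ge_2_int by blast
    define m where "m = n div p"
    have nm: "n = p*m" unfolding m_def using p(2) by simp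
    have m0: "m > 0" using nm less.prems p2 by (simp add: zero_less_mult_iff)
    have "2*m \<le> p*m" using p2 m0 by (intro mult_right_mono) auto
    then have "m < n" using nm m0 by linarith
    then have lt: "nat m < nat n" using m0 by simp
    have m4: "\<not> 4 dvd m"
    proof
      assume "4 dvd m"
      then have "4 dvd p*m" by (rule dvd_mult)
      then show False using less.prems nm by simp
    qed
    have IH: "Sx m \<and> (m \<notin> {1,2,5,10} \<longrightarrow> Tx m)" using less.hyps[OF lt m0 m4] .
    show ?thesis
    proof (cases "p dvd m")
      case True
      have "p \<noteq> 2"
      proof
        assume "p = 2"
        then have "2*2 dvd p*m" using True by (intro mult_dvd_mono) auto
        then show False using less.prems nm by simp
      qed
      then have "Tx (p*m)" using lift_T[OF p(1) _ True m0] IH by blast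
      then show ?thesis using nm T_S by simp
    next
      case False
      have "coprime p m" using p(1) False by (rule prime_imp_coprime)
      then have cop: "coprime m p" by (simp only: coprime_commute)
      have S: "Sx n" unfolding nm using crt_S[OF cop] IH prime_S[OF p(1)] by (simp add: mult.commute)
      have T: "Tx n" if nn: "n \<notin> {1,2,5,10}"
      proof (cases "m \<in> {1,2,5,10}")
        case False
        then have "Tx (m*p)" using crt_T1[OF cop] IH prime_S[OF p(1)] by blast
        then show ?thesis using nm by (simp add: mult.commute)
      next
        case mm: True
        show ?thesis
        proof (cases "p = 2 \<or> p = 5")
          case False
          then have "Tx (m*p)" using crt_T2[OF cop] IH prime_T[OF p(1)] by blast
          then show ?thesis using nm by (simp add: mult.commute)
        next
          case True
          then have False using mm nn nm \<open>\<not> p dvd m\<close> by auto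
          then show ?thesis ..
        qed
      qed
      show ?thesis using S T by blast
    qed
  qed
qed

theorem corollary2p16:
  fixes n :: int
  assumes "n \<ge> 3" and "n \<noteq> 5" and "\<not> (4 dvd n)"
  shows "\<exists>a b c d :: int. n = a^2 + b^2 + c^2 + d^2
           \<and> gcd (gcd a b) (gcd c d) = 1
           \<and> length (filter (\<lambda>x. x = 0) [a, b, c, d]) \<le> 1"
proof (cases "n = 10")
  case True
  then show ?thesis by (intro exI[of _ 2] exI[of _ 2] exI[of _ 1] exI[of _ 1]) simp
next
  case False
  have "n \<notin> {1,2,5,10}" using assms False by auto
  then have "Tx n" using ST[of n] assms by simp
  then obtain x y where r: "n dvd x^2+y^2+1" and cy: "coprime y n" and nx: "\<not> n dvd x"
    unfolding Tx_def by blast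
  have n0: "n > 0" and n2: "n \<ge> 2" using assms by simp_all
  obtain v where vL: "inL n x y v" and nv: "nrm v = n" using rep_exists[OF n0 r] by blast
  obtain a b c d where vv: "v = (a,b,c,d)" by (cases v)
  have "gcd (gcd a b) (gcd c d) = 1" using prim[OF n2 r] vL nv vv by simp
  moreover have "length (filter (\<lambda>x. x = 0) [a, b, c, d]) \<le> 1"
    using zeros[OF n2 r cy nx] vL nv vv by simp
  moreover have "n = a^2 + b^2 + c^2 + d^2" using nv vv by simp
  ultimately show ?thesis by (intro exI[of _ a] exI[of _ b] exI[of _ c] exI[of _ d]) simp
qed

end
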